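(* Fix an integer $c\ge1$. For each $n$, let $C_n=\{V_{1,n},\dots,V_{c,n}\}$ be a partition of $\{1,\dots,n\}$ with $n_i:=|V_{i,n}|$, let $P_n$ be a symmetric $c\times c$ matrix with entries in $[0,1]$, and let $G_n\sim\mathrm{SBM}(n;C_n,P_n)$. Let $s_n(i,i):=\binom{n_i}{2}$ and $s_n(i,j):=n_in_j$ for $i\ne j$, and let $$\mathcal{K}:=\Big\{(i,j)\in\{1,\dots,c\}^2:\ \limsup_{n\to\infty}s_n(i,j)\,(1-P_n(i,j))>0\Big\}.$$ Suppose that $n_in_j\to\infty$ for each $(i,j)\in\mathcal{K}$, and that there is a constant $C>1$ such that for all sufficiently large $n$, $$\sum_{k=1}^c n_k\,P_n(i,k)P_n(k,j)\ \ge\ C\ln(n_in_j)\quad\text{for all }(i,j)\in\mathcal{K}.$$ Then $\operatorname{diam}(G_n)\le 2$ with probability tending to $1$ as $n\to\infty$.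
   Context: Stochastic Block Model: $G\sim\mathrm{SBM}(n;C,P)$, for a partition $C=\{V_1,\dots,V_c\}$ of $V=\{1,\dots,n\}$ and a symmetric $c\times c$ matrix $P$ with entries in $[0,1]$, is the random simple undirected graph on $V$ in which, independently for each pair of distinct vertices $u\in V_i$, $v\in V_j$, the edge $\{u,v\}$ is present with probability $P(i,j)$. The diameter is the maximum shortest-path distance between two vertices ($\infty$ if disconnected). *)

theory Defs
  imports "HOL-Probability.Probability" "HOL-Library.Extended_Nat"
begin

text \<open>Simple graphs on vertex set V are given by an edge set E of 2-element subsets.\<close>

definition walk :: "'a set \<Rightarrow> 'a set set \<Rightarrow> 'a list \<Rightarrow> bool" where
  "walk V E xs \<longleftrightarrow> xs \<noteq> [] \<and> set xs \<subseteq> V \<and>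
     (\<forall>i. Suc i < length xs \<longrightarrow> {xs ! i, xs ! Suc i} \<in> E)"

text \<open>Shortest-path distance (infinity if no path).\<close>
definition gdist :: "'a set \<Rightarrow> 'a set set \<Rightarrow> 'a \<Rightarrow> 'a \<Rightarrow> enat" where
  "gdist V E u v = (INF xs \<in> {xs. walk V E xs \<and> hd xs = u \<and> last xs = v}. enat (length xs - 1))"

definition gdiam :: "'a set \<Rightarrow> 'a set set \<Rightarrow> enat" where
  "gdiam V E = (SUP u \<in> V. SUP v \<in> V. gdist V E u v)"

definition vpairs :: "nat \<Rightarrow> nat set set" where
  "vpairs n = {{u, v} | u v. u \<in> {1..n} \<and> v \<in> {1..n} \<and> u \<noteq> v}"

text \<open>Stochastic block model SBM(n; C, P): the partition C of {1..n} into blocks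
  V_1..V_c is given by a labelling blk : {1..n} -> {1..c} (V_i = blk^-1(i));
  P i j is the edge probability between blocks i and j (P symmetric).\<close>
definition sbm :: "nat \<Rightarrow> (nat \<Rightarrow> nat) \<Rightarrow> (nat \<Rightarrow> nat \<Rightarrow> real) \<Rightarrow> nat set set pmf" where
  "sbm n blk P = map_pmf (\<lambda>f. {e \<in> vpairs n. f e})
     (Pi_pmf (vpairs n) False (\<lambda>e. bernoulli_pmf (P (blk (Min e)) (blk (Max e)))))"

definition bsize :: "nat \<Rightarrow> (nat \<Rightarrow> nat) \<Rightarrow> nat \<Rightarrow> nat" where
  "bsize n blk i = card {v \<in> {1..n}. blk v = i}"

definition spairs :: "nat \<Rightarrow> (nat \<Rightarrow> nat) \<Rightarrow> nat \<Rightarrow> nat \<Rightarrow> nat" where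
  "spairs n blk i j = (if i = j then bsize n blk i choose 2 else bsize n blk i * bsize n blk j)"

end

theory Submission
  imports Defs
begin

lemma pmf_compl: "measure_pmf.prob M (UNIV - X) = 1 - measure_pmf.prob M X"
  using measure_pmf.prob_compl[of X M] by simp

lemma prob_coord:
  assumes "finite A" "e \<in> A" "0 \<le> q e" "q e \<le> 1"
  shows "measure_pmf.prob (Pi_pmf A False (\<lambda>e. bernoulli_pmf (q e))) {f. f e} = q e"
proof -
  have "{f. f e} = (\<lambda>f. f e) -` {True}" by auto
  then have "measure_pmf.prob (Pi_pmf A False (\<lambda>e. bernoulli_pmf (q e))) {f. f e}
     = measure_pmf.prob (map_pmf (\<lambda>f. f e) (Pi_pmf A False (\<lambda>e. bernoulli_pmf (q e)))) {True}"
    by simp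
  also have "map_pmf (\<lambda>f. f e) (Pi_pmf A False (\<lambda>e. bernoulli_pmf (q e))) = bernoulli_pmf (q e)"
    using Pi_pmf_component[OF assms(1), of e False "\<lambda>e. bernoulli_pmf (q e)"] assms(2) by simp
  finally show ?thesis using assms by (simp add: measure_pmf_single)
qed

lemma prob_coord_not:
  assumes "finite A" "e \<in> A" "0 \<le> q e" "q e \<le> 1"
  shows "measure_pmf.prob (Pi_pmf A False (\<lambda>e. bernoulli_pmf (q e))) {f. \<not> f e} = 1 - q e"
proof -
  have "{f. \<not> f e} = UNIV - {f. f e}" by auto
  then show ?thesis using prob_coord[of A e q] assms by (simp add: pmf_compl)
qed

lemma prob_two:
  assumes A: "finite A" "a \<in> A" "b \<in> A" "a \<noteq> b" and q: "\<forall>e\<in>A. 0 \<le> q e \<and> q e \<le> 1"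
  shows "measure_pmf.prob (Pi_pmf A False (\<lambda>e. bernoulli_pmf (q e))) {f. f a \<and> f b} = q a * q b"
proof -
  let ?M = "Pi_pmf A False (\<lambda>e. bernoulli_pmf (q e))"
  have ind: "prob_space.indep_vars (measure_pmf ?M) (\<lambda>_. count_space (UNIV::bool set)) (\<lambda>x (f::_ \<Rightarrow> bool). f x) A"
    by (rule indep_vars_Pi_pmf) (use assms in auto)
  have "measure_pmf.prob ?M (\<Inter>i\<in>{a,b}. (\<lambda>f. f i) -` {True} \<inter> space ?M) = (\<Prod>i\<in>{a,b}. measure_pmf.prob ?M ((\<lambda>f. f i) -` {True} \<inter> space ?M))"
    by (rule prob_space.indep_varsD[OF prob_space_measure_pmf ind]) (use A in auto)
  moreover have "(\<Inter>i\<in>{a,b}. (\<lambda>f. f i) -` {True} \<inter> space ?M) = {f. f a \<and> f b}" by auto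
  moreover have "\<And>i. (\<lambda>f. f i) -` {True} \<inter> space ?M = {f. f i}" by auto
  ultimately show ?thesis using A q prob_coord[of A a q] prob_coord[of A b q] by simp
qed

lemma prob_noboth:
  assumes fin: "finite A" "finite W"
    and ab: "\<forall>w\<in>W. a w \<in> A \<and> b w \<in> A \<and> a w \<noteq> b w"
    and disj: "disjoint_family_on (\<lambda>w. {a w, b w}) W"
    and q: "\<forall>e\<in>A. 0 \<le> q e \<and> q e \<le> 1"
  shows "measure_pmf.prob (Pi_pmf A False (\<lambda>e. bernoulli_pmf (q e))) {f. \<forall>w\<in>W. \<not> (f (a w) \<and> f (b w))}
     = (\<Prod>w\<in>W. 1 - q (a w) * q (b w))"
proof (cases "W = {}")
  case True then show ?thesis by simp
next
  case False
  let ?M = "Pi_pmf A False (\<lambda>e. bernoulli_pmf (q e))"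
  have ind: "prob_space.indep_vars (measure_pmf ?M) (\<lambda>_. count_space (UNIV::bool set)) (\<lambda>x (f::_ \<Rightarrow> bool). f x) A"
    by (rule indep_vars_Pi_pmf) (use assms in auto)
  have ind2: "prob_space.indep_vars (measure_pmf ?M) (\<lambda>w. PiM {a w, b w} (\<lambda>_. count_space UNIV))
      (\<lambda>w f. restrict (\<lambda>i. f i) {a w, b w}) W"
    by (rule prob_space.indep_vars_restrict[OF prob_space_measure_pmf ind]) (use ab disj in auto)
  define S where "S w = {g \<in> space (PiM {a w, b w} (\<lambda>_. count_space (UNIV::bool set))). \<not> (g (a w) \<and> g (b w))}" for w
  have Ssets: "S w \<in> sets (PiM {a w, b w} (\<lambda>_. count_space UNIV))" for w
    unfolding S_def by measurable
  have "measure_pmf.prob ?M (\<Inter>w\<in>W. (\<lambda>f. restrict (\<lambda>i. f i) {a w, b w}) -` S w \<inter> space ?M)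
     = (\<Prod>w\<in>W. measure_pmf.prob ?M ((\<lambda>f. restrict (\<lambda>i. f i) {a w, b w}) -` S w \<inter> space ?M))"
    by (rule prob_space.indep_varsD[OF prob_space_measure_pmf ind2]) (use False fin Ssets in auto)
  moreover have pre: "(\<lambda>f. restrict (\<lambda>i. f i) {a w, b w}) -` S w \<inter> space ?M = {f. \<not> (f (a w) \<and> f (b w))}" for w
    unfolding S_def by (auto simp: space_PiM)
  moreover have "(\<Inter>w\<in>W. {f. \<not> (f (a w) \<and> f (b w))}) = {f. \<forall>w\<in>W. \<not> (f (a w) \<and> f (b w))}"
    using False by auto
  moreover have "measure_pmf.prob ?M {f. \<not> (f (a w) \<and> f (b w))} = 1 - q (a w) * q (b w)" if "w \<in> W" for w
  proof -
    have "{f. \<not> (f (a w) \<and> f (b w))} = UNIV - {f. f (a w) \<and> f (b w)}" by auto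
    then show ?thesis using prob_two[OF fin(1), of "a w" "b w" q] ab q that
      by (simp add: pmf_compl)
  qed
  ultimately show ?thesis by simp
qed


lemma gdist_le:
  assumes "walk V E xs" "hd xs = u" "last xs = v"
  shows "gdist V E u v \<le> enat (length xs - 1)"
  unfolding gdist_def by (rule INF_lower) (use assms in auto)

lemma diam_le2:
  assumes "\<forall>u\<in>V. \<forall>v\<in>V. u \<noteq> v \<longrightarrow> {u,v} \<in> E \<or> (\<exists>w\<in>V. {u,w} \<in> E \<and> {w,v} \<in> E)"
  shows "gdiam V E \<le> 2"
  unfolding gdiam_def
proof (intro SUP_least)
  fix u v assume uv: "u \<in> V" "v \<in> V"
  show "gdist V E u v \<le> 2"
  proof (cases "u = v")
    case True
    have "walk V E [u]" using uv by (auto simp: walk_def)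
    then have "gdist V E u v \<le> enat (length [u] - 1)" using True by (intro gdist_le) auto
    moreover have "enat 0 \<le> 2" by (simp add: zero_enat_def[symmetric])
    ultimately show ?thesis by simp
  next
    case False
    then consider "{u,v} \<in> E" | w where "w \<in> V" "{u,w} \<in> E" "{w,v} \<in> E" using assms uv by blast
    then show ?thesis
    proof cases
      case 1
      have "walk V E [u,v]" using uv 1 by (auto simp: walk_def)
      then have "gdist V E u v \<le> enat (length [u,v] - 1)" by (intro gdist_le) auto
      then show ?thesis by (simp add: order_trans one_enat_def numeral_eq_enat)
    next
      case 2
      have "walk V E [u,w,v]" using uv 2 unfolding walk_def
        by (auto simp: less_Suc_eq nth_Cons split: nat.splits)
      then have "gdist V E u v \<le> enat (length [u,w,v] - 1)" by (intro gdist_le) auto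
      then show ?thesis by (simp add: numeral_eq_enat numeral_2_eq_2)
    qed
  qed
qed

lemma prob_nocommon:
  assumes fin: "finite A" "finite W" and uv: "u \<noteq> v" "u \<notin> W" "v \<notin> W"
    and inA: "\<forall>w\<in>W. {u,w} \<in> A \<and> {w,v} \<in> A"
    and q: "\<forall>e\<in>A. 0 \<le> q e \<and> q e \<le> 1"
  shows "measure_pmf.prob (Pi_pmf A False (\<lambda>e. bernoulli_pmf (q e)))
     {f. \<not> f {u,v} \<and> (\<forall>w\<in>W. \<not> (f {u,w} \<and> f {w,v}))} \<le> exp (- (\<Sum>w\<in>W. q {u,w} * q {w,v}))"
proof -
  let ?M = "Pi_pmf A False (\<lambda>e. bernoulli_pmf (q e))"
  have "measure_pmf.prob ?M {f. \<not> f {u,v} \<and> (\<forall>w\<in>W. \<not> (f {u,w} \<and> f {w,v}))}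
     \<le> measure_pmf.prob ?M {f. \<forall>w\<in>W. \<not> (f {u,w} \<and> f {w,v})}"
    by (rule measure_pmf.finite_measure_mono) auto
  also have "\<dots> = (\<Prod>w\<in>W. 1 - q {u,w} * q {w,v})"
  proof (rule prob_noboth[OF fin _ _ q])
    show "\<forall>w\<in>W. {u, w} \<in> A \<and> {w, v} \<in> A \<and> {u, w} \<noteq> {w, v}"
      using inA uv by (auto simp: doubleton_eq_iff)
    show "disjoint_family_on (\<lambda>w. {{u, w}, {w, v}}) W"
      unfolding disjoint_family_on_def using uv by (auto simp: doubleton_eq_iff)
  qed
  also have "\<dots> \<le> (\<Prod>w\<in>W. exp (- (q {u,w} * q {w,v})))"
  proof (rule prod_mono, intro ballI conjI)
    fix w assume "w \<in> W"
    then have "0 \<le> q {u,w}" "q {u,w} \<le> 1" "0 \<le> q {w,v}" "q {w,v} \<le> 1" using inA q by auto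
    then have "q {u,w} * q {w,v} \<le> 1" by (simp add: mult_le_one)
    then show "0 \<le> 1 - q {u,w} * q {w,v}" by simp
    show "1 - q {u,w} * q {w,v} \<le> exp (- (q {u,w} * q {w,v}))"
      using exp_ge_add_one_self[of "- (q {u,w} * q {w,v})"] by simp
  qed
  also have "\<dots> = exp (- (\<Sum>w\<in>W. q {u,w} * q {w,v}))"
    using exp_sum[OF fin(2), of "\<lambda>w. - (q {u,w} * q {w,v})"] by (simp add: sum_negf)
  finally show ?thesis .
qed

lemma two_choose: "2 * (m choose 2) = m * (m - 1::nat)"
proof (induction m)
  case 0 then show ?case by simp
next
  case (Suc m)
  have "Suc m choose 2 = m + (m choose 2)" by (simp add: numeral_2_eq_2)
  then show ?case using Suc by (cases m) (auto simp: algebra_simps)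
qed

lemma tendsto_zero_limsup:
  fixes a :: "nat \<Rightarrow> real"
  assumes "\<And>n. 0 \<le> a n" "\<not> limsup (\<lambda>n. ereal (a n)) > 0"
  shows "a \<longlonglongrightarrow> 0"
proof -
  have l1: "limsup (\<lambda>n. ereal (a n)) \<le> 0" using assms(2) by simp
  have l2: "0 \<le> liminf (\<lambda>n. ereal (a n))"
    by (rule Liminf_bounded) (use assms(1) in auto)
  have l3: "liminf (\<lambda>n. ereal (a n)) \<le> limsup (\<lambda>n. ereal (a n))"
    by (rule Liminf_le_Limsup) simp
  have "(\<lambda>n. ereal (a n)) \<longlonglongrightarrow> 0"
    using l1 l2 l3 by (subst tendsto_iff_Liminf_eq_Limsup) auto
  then show ?thesis by (simp add: zero_ereal_def lim_ereal)
qed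

theorem lemma3p1:
  fixes c :: nat
    and blk :: "nat \<Rightarrow> nat \<Rightarrow> nat"
    and P :: "nat \<Rightarrow> nat \<Rightarrow> nat \<Rightarrow> real"
    and K :: "(nat \<times> nat) set"
  assumes c_pos: "c \<ge> 1"
    and blk_range: "\<And>n v. v \<in> {1..n} \<Longrightarrow> blk n v \<in> {1..c}"
    and P_sym: "\<And>n i j. i \<in> {1..c} \<Longrightarrow> j \<in> {1..c} \<Longrightarrow> P n i j = P n j i"
    and P_range: "\<And>n i j. i \<in> {1..c} \<Longrightarrow> j \<in> {1..c} \<Longrightarrow> 0 \<le> P n i j \<and> P n i j \<le> 1"
    and K_def: "K = {(i, j). i \<in> {1..c} \<and> j \<in> {1..c} \<and>
                   limsup (\<lambda>n. ereal (real (spairs n (blk n) i j) * (1 - P n i j))) > 0}"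
    and K_growth: "\<And>i j. (i, j) \<in> K \<Longrightarrow>
                   filterlim (\<lambda>n. real (bsize n (blk n) i * bsize n (blk n) j)) at_top sequentially"
    and codegree: "\<exists>C > 1. eventually (\<lambda>n. \<forall>(i, j) \<in> K.
                   (\<Sum>k = 1..c. real (bsize n (blk n) k) * P n i k * P n k j)
                     \<ge> C * ln (real (bsize n (blk n) i * bsize n (blk n) j))) sequentially"
  shows "(\<lambda>n. measure_pmf.prob (sbm n (blk n) (P n)) {E. gdiam {1..n} E \<le> 2}) \<longlonglongrightarrow> 1"
proof -
  obtain C where C1: "C > 1" and evC: "eventually (\<lambda>n. \<forall>(i, j) \<in> K.
                   (\<Sum>k = 1..c. real (bsize n (blk n) k) * P n i k * P n k j)
                     \<ge> C * ln (real (bsize n (blk n) i * bsize n (blk n) j))) sequentially"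
    using codegree by blast
  define q where "q n e = P n (blk n (Min e)) (blk n (Max e))" for n e
  define Om where "Om n = Pi_pmf (vpairs n) False (\<lambda>e. bernoulli_pmf (q n e))" for n
  define bad where "bad n u v = {f :: nat set \<Rightarrow> bool. \<not> f {u,v} \<and> (\<forall>w\<in>{1..n}-{u,v}. \<not> (f {u,w} \<and> f {w,v}))}" for n u v :: nat
  define D where "D n i j = {(u,v). u \<in> {1..n} \<and> v \<in> {1..n} \<and> u \<noteq> v \<and> blk n u = i \<and> blk n v = j}" for n i j
  define T where "T n ij = (\<Sum>x\<in>D n (fst ij) (snd ij). measure_pmf.prob (Om n) (bad n (fst x) (snd x)))" for n ij
  define I2 where "I2 = {1..c} \<times> {1..c}"
  define V where "V n i = {v \<in> {1..n}. blk n v = i}" for n i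
  have finA: "finite (vpairs n)" for n
  proof -
    have "vpairs n \<subseteq> Pow {1..n}" by (auto simp: vpairs_def)
    then show ?thesis by (rule finite_subset) simp
  qed
  have pairA: "{u,w} \<in> vpairs n" if "u \<in> {1..n}" "w \<in> {1..n}" "u \<noteq> w" for n u w
    using that unfolding vpairs_def by blast
  have qpair: "q n {u,w} = P n (blk n u) (blk n w)" if "u \<in> {1..n}" "w \<in> {1..n}" for n u w
  proof (cases "u \<le> w")
    case True then show ?thesis by (simp add: q_def min_def max_def)
  next
    case False then show ?thesis using P_sym[OF blk_range[OF that(1)] blk_range[OF that(2)]]
      by (simp add: q_def min_def max_def)
  qed
  have qA: "\<forall>e\<in>vpairs n. 0 \<le> q n e \<and> q n e \<le> 1" for n
  proof
    fix e assume "e \<in> vpairs n"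
    then obtain u w where e: "e = {u,w}" "u \<in> {1..n}" "w \<in> {1..n}" unfolding vpairs_def by blast
    show "0 \<le> q n e \<and> q n e \<le> 1" using e qpair[OF e(2,3)] P_range[OF blk_range[OF e(2)] blk_range[OF e(3)]] by simp
  qed
  have finD: "finite (D n i j)" for n i j
    by (rule finite_subset[of _ "{1..n} \<times> {1..n}"]) (auto simp: D_def)
  have cardD: "card (D n i j) \<le> bsize n (blk n) i * bsize n (blk n) j" for n i j
  proof -
    have "D n i j \<subseteq> V n i \<times> V n j" by (auto simp: D_def V_def)
    then have "card (D n i j) \<le> card (V n i \<times> V n j)" by (rule card_mono[rotated]) (auto simp: V_def)
    then show ?thesis by (simp add: card_cartesian_product bsize_def V_def)
  qed
  have cardD2: "card (D n i j) \<le> 2 * spairs n (blk n) i j" for n i j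
  proof (cases "i = j")
    case False then show ?thesis using cardD[of n i j] by (simp add: spairs_def)
  next
    case True
    let ?m = "bsize n (blk n) i"
    have finV: "finite (V n i)" by (simp add: V_def)
    have "D n i j \<subseteq> V n i \<times> V n i - (\<lambda>x. (x,x)) ` V n i" using True by (auto simp: D_def V_def)
    then have "card (D n i j) \<le> card (V n i \<times> V n i - (\<lambda>x. (x,x)) ` V n i)"
      by (rule card_mono[rotated]) (use finV in auto)
    also have "\<dots> = card (V n i \<times> V n i) - card ((\<lambda>x. (x,x)) ` V n i)"
      by (rule card_Diff_subset) (use finV in auto)
    also have "\<dots> = ?m * ?m - ?m"
      by (simp add: card_cartesian_product card_image inj_on_def bsize_def V_def)
    also have "\<dots> = 2 * spairs n (blk n) i j" using True two_choose[of ?m]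
      by (simp add: spairs_def algebra_simps diff_mult_distrib2)
    finally show ?thesis .
  qed
  have Tnn: "0 \<le> T n ij" for n ij unfolding T_def by (intro sum_nonneg) simp

  have low: "1 - (\<Sum>ij\<in>I2. T n ij) \<le> measure_pmf.prob (sbm n (blk n) (P n)) {E. gdiam {1..n} E \<le> 2}" for n
  proof -
    let ?g = "\<lambda>f. {e \<in> vpairs n. f e}"
    have sbm_eq: "sbm n (blk n) (P n) = map_pmf ?g (Om n)" unfolding sbm_def Om_def q_def by simp
    define Gd where "Gd = {f. \<forall>u\<in>{1..n}. \<forall>v\<in>{1..n}. u \<noteq> v \<longrightarrow> f {u,v} \<or> (\<exists>w\<in>{1..n}. w \<noteq> u \<and> w \<noteq> v \<and> f {u,w} \<and> f {w,v})}"
    have sub: "Gd \<subseteq> ?g -` {E. gdiam {1..n} E \<le> 2}"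
    proof
      fix f assume f: "f \<in> Gd"
      have "gdiam {1..n} (?g f) \<le> 2"
      proof (rule diam_le2, intro ballI impI)
        fix u v assume uv: "u \<in> {1..n}" "v \<in> {1..n}" "u \<noteq> v"
        then consider "f {u,v}" | w where "w \<in> {1..n}" "w \<noteq> u" "w \<noteq> v" "f {u,w}" "f {w,v}"
          using f unfolding Gd_def by blast
        then show "{u,v} \<in> ?g f \<or> (\<exists>w\<in>{1..n}. {u,w} \<in> ?g f \<and> {w,v} \<in> ?g f)"
        proof cases
          case 1 then show ?thesis using pairA[OF uv] by blast
        next
          case 2 then show ?thesis using pairA[of u n w] pairA[of w n v] uv by auto
        qed
      qed
      then show "f \<in> ?g -` {E. gdiam {1..n} E \<le> 2}" by simp
    qed
    define X where "X = Sigma I2 (\<lambda>ij. D n (fst ij) (snd ij))"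
    have finX: "finite X" unfolding X_def I2_def by (intro finite_SigmaI finD) auto
    have compl: "UNIV - Gd \<subseteq> (\<Union>y\<in>X. bad n (fst (snd y)) (snd (snd y)))"
    proof
      fix f assume "f \<in> UNIV - Gd"
      then obtain u v where uv: "u \<in> {1..n}" "v \<in> {1..n}" "u \<noteq> v" "\<not> f {u,v}"
        and nw: "\<forall>w\<in>{1..n}. w \<noteq> u \<and> w \<noteq> v \<longrightarrow> \<not> (f {u,w} \<and> f {w,v})"
        unfolding Gd_def by blast
      have "((blk n u, blk n v), (u, v)) \<in> X"
        using uv blk_range[OF uv(1)] blk_range[OF uv(2)] by (auto simp: X_def I2_def D_def)
      moreover have "f \<in> bad n u v" using uv nw by (auto simp: bad_def)
      ultimately show "f \<in> (\<Union>y\<in>X. bad n (fst (snd y)) (snd (snd y)))" by force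
    qed
    have "measure_pmf.prob (Om n) (UNIV - Gd) \<le> measure_pmf.prob (Om n) (\<Union>y\<in>X. bad n (fst (snd y)) (snd (snd y)))"
      by (rule measure_pmf.finite_measure_mono[OF compl]) simp
    also have "\<dots> \<le> (\<Sum>y\<in>X. measure_pmf.prob (Om n) (bad n (fst (snd y)) (snd (snd y))))"
      by (rule measure_pmf.finite_measure_subadditive_finite[OF finX]) simp
    also have "\<dots> = (\<Sum>ij\<in>I2. T n ij)"
    proof -
      have "(\<Sum>ij\<in>I2. \<Sum>x\<in>D n (fst ij) (snd ij). measure_pmf.prob (Om n) (bad n (fst x) (snd x)))
          = (\<Sum>(ij,x)\<in>X. measure_pmf.prob (Om n) (bad n (fst x) (snd x)))"
        unfolding X_def by (rule sum.Sigma) (auto simp: I2_def finD)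
      then show ?thesis by (simp add: T_def split_beta)
    qed
    finally have bnd: "measure_pmf.prob (Om n) (UNIV - Gd) \<le> (\<Sum>ij\<in>I2. T n ij)" .
    have "measure_pmf.prob (sbm n (blk n) (P n)) {E. gdiam {1..n} E \<le> 2}
        = measure_pmf.prob (Om n) (?g -` {E. gdiam {1..n} E \<le> 2})" by (simp add: sbm_eq)
    also have "\<dots> \<ge> measure_pmf.prob (Om n) Gd"
      by (rule measure_pmf.finite_measure_mono[OF sub]) simp
    finally show ?thesis using bnd pmf_compl[of "Om n" Gd] by linarith
  qed
  have Tlim: "(\<lambda>n. T n ij) \<longlonglongrightarrow> 0" if ijI: "ij \<in> I2" for ij
  proof -
    obtain i j where ij: "ij = (i,j)" "i \<in> {1..c}" "j \<in> {1..c}" using ijI by (auto simp: I2_def)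
    have Tij: "T n ij = (\<Sum>x\<in>D n i j. measure_pmf.prob (Om n) (bad n (fst x) (snd x)))" for n
      by (simp add: T_def ij)
    have xD: "fst x \<in> {1..n}" "snd x \<in> {1..n}" "fst x \<noteq> snd x" "blk n (fst x) = i" "blk n (snd x) = j"
      if "x \<in> D n i j" for n x using that by (auto simp: D_def)
    show ?thesis
    proof (cases "(i,j) \<in> K")
      case False
      define a where "a n = real (spairs n (blk n) i j) * (1 - P n i j)" for n
      have a_nn: "0 \<le> a n" for n using P_range[OF ij(2,3)] by (simp add: a_def)
      have "\<not> limsup (\<lambda>n. ereal (a n)) > 0" using False ij K_def by (simp add: a_def)
      then have alim: "a \<longlonglongrightarrow> 0" by (rule tendsto_zero_limsup[OF a_nn])
      have Tle: "T n ij \<le> 2 * a n" for n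
      proof -
        have "T n ij \<le> (\<Sum>x\<in>D n i j. 1 - P n i j)"
          unfolding Tij
        proof (rule sum_mono)
          fix x assume x: "x \<in> D n i j"
          have "measure_pmf.prob (Om n) (bad n (fst x) (snd x)) \<le> measure_pmf.prob (Om n) {f. \<not> f {fst x, snd x}}"
            by (rule measure_pmf.finite_measure_mono) (auto simp: bad_def)
          also have "\<dots> = 1 - q n {fst x, snd x}"
            unfolding Om_def using qA[of n] pairA[OF xD(1-3)[OF x]]
            by (intro prob_coord_not finA) auto
          also have "\<dots> = 1 - P n i j" using qpair[OF xD(1,2)[OF x]] xD(4,5)[OF x] by simp
          finally show "measure_pmf.prob (Om n) (bad n (fst x) (snd x)) \<le> 1 - P n i j" .
        qed
        also have "\<dots> = real (card (D n i j)) * (1 - P n i j)" by simp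
        also have "\<dots> \<le> real (2 * spairs n (blk n) i j) * (1 - P n i j)"
          by (rule mult_right_mono) (use cardD2[of n i j] P_range[OF ij(2,3)] in auto)
        finally show ?thesis by (simp add: a_def)
      qed
      show ?thesis
        by (rule tendsto_sandwich[of "\<lambda>_. 0" _ _ "\<lambda>n. 2 * a n"])
           (use Tnn Tle tendsto_mult_right_zero[OF alim, of 2] in auto)
    next
      case True
      define N where "N n = bsize n (blk n) i * bsize n (blk n) j" for n
      define S where "S n = (\<Sum>k = 1..c. real (bsize n (blk n) k) * P n i k * P n k j)" for n
      have Nlim: "filterlim (\<lambda>n. real (N n)) at_top sequentially"
        unfolding N_def by (rule K_growth[OF True])
      have ev1: "eventually (\<lambda>n. 1 \<le> real (N n)) sequentially"
        using Nlim unfolding filterlim_at_top by blast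
      have ev2: "eventually (\<lambda>n. S n \<ge> C * ln (real (N n))) sequentially"
        using evC True unfolding S_def N_def by (auto elim: eventually_mono)
      have bound: "eventually (\<lambda>n. T n ij \<le> exp 2 * real (N n) powr (1 - C)) sequentially"
        using ev1 ev2
      proof (eventually_elim)
        case (elim n)
        have Npos: "0 < real (N n)" using elim(1) by simp
        have pb: "measure_pmf.prob (Om n) (bad n (fst x) (snd x)) \<le> exp 2 * real (N n) powr (- C)"
          if x: "x \<in> D n i j" for x
        proof -
          note xx = xD[OF x]
          define u where "u = fst x"
          define v where "v = snd x"
          define W where "W = {1..n} - {u, v}"
          define h where "h w = P n i (blk n w) * P n (blk n w) j" for w
          have u: "u \<in> {1..n}" "blk n u = i" and v: "v \<in> {1..n}" "blk n v = j" and uv: "u \<noteq> v"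
            using xx by (auto simp: u_def v_def)
          have hb: "0 \<le> h w \<and> h w \<le> 1" if "w \<in> {1..n}" for w
            using P_range[OF ij(2) blk_range[OF that]] P_range[OF blk_range[OF that] ij(3)]
            by (auto simp: h_def mult_le_one)
          have "measure_pmf.prob (Om n) (bad n u v) \<le> exp (- (\<Sum>w\<in>W. q n {u,w} * q n {w,v}))"
            unfolding bad_def Om_def W_def
            by (rule prob_nocommon[OF finA]) (use uv u v pairA qA in auto)
          also have "(\<Sum>w\<in>W. q n {u,w} * q n {w,v}) = (\<Sum>w\<in>W. h w)"
            by (rule sum.cong) (use u v qpair in \<open>auto simp: W_def h_def\<close>)
          also have "(\<Sum>w\<in>W. h w) \<ge> S n - 2"
          proof -
            have "sum h {1..n} = (\<Sum>k\<in>{1..c}. sum h {w \<in> {1..n}. blk n w = k})"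
              by (rule sum.group[symmetric]) (use blk_range in auto)
            also have "\<dots> = S n" unfolding S_def
            proof (rule sum.cong)
              fix k assume "k \<in> {1..c}"
              have "sum h {w \<in> {1..n}. blk n w = k} = (\<Sum>w\<in>{w \<in> {1..n}. blk n w = k}. P n i k * P n k j)"
                by (rule sum.cong) (auto simp: h_def)
              then show "sum h {w \<in> {1..n}. blk n w = k} = real (bsize n (blk n) k) * P n i k * P n k j"
                by (simp add: bsize_def)
            qed simp
            finally have e1: "sum h {1..n} = S n" .
            have e2: "sum h {1..n} = sum h W + sum h {u,v}"
              unfolding W_def by (rule sum.subset_diff) (use u v in auto)
            have "sum h {u,v} \<le> real (card {u,v}) * 1"
              by (rule sum_bounded_above) (use hb u v in auto)
            then have "sum h {u,v} \<le> 2" using uv by simp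
            then show ?thesis using e1 e2 by linarith
          qed
          then have "exp (- (\<Sum>w\<in>W. h w)) \<le> exp (2 - S n)" by simp
          also have "\<dots> \<le> exp (2 - C * ln (real (N n)))" using elim(2) by simp
          also have "\<dots> = exp 2 * real (N n) powr (- C)"
            using Npos by (simp add: powr_def exp_diff exp_minus field_simps)
          finally show ?thesis by (simp add: u_def v_def)
        qed
        have "T n ij \<le> (\<Sum>x\<in>D n i j. exp 2 * real (N n) powr (- C))"
          unfolding Tij by (rule sum_mono) (rule pb)
        also have "\<dots> = real (card (D n i j)) * (exp 2 * real (N n) powr (- C))" by simp
        also have "\<dots> \<le> real (N n) * (exp 2 * real (N n) powr (- C))"
          by (rule mult_right_mono) (use cardD[of n i j] in \<open>auto simp: N_def simp del: of_nat_mult simp flip: of_nat_mult\<close>)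
        also have "\<dots> = exp 2 * real (N n) powr (1 - C)"
          using Npos by (simp add: powr_diff powr_minus field_simps)
        finally show ?case .
      qed
      have "(\<lambda>n. exp 2 * real (N n) powr (1 - C)) \<longlonglongrightarrow> 0"
        by (rule tendsto_mult_right_zero, rule tendsto_neg_powr) (use C1 Nlim in auto)
      then show ?thesis
        by (rule tendsto_sandwich[of "\<lambda>_. 0" _ _ "\<lambda>n. exp 2 * real (N n) powr (1 - C)", rotated 3])
           (use Tnn bound in auto)
    qed
  qed
  have "(\<lambda>n. \<Sum>ij\<in>I2. T n ij) \<longlonglongrightarrow> 0" by (rule tendsto_null_sum) (rule Tlim)
  then have lim1: "(\<lambda>n. 1 - (\<Sum>ij\<in>I2. T n ij)) \<longlonglongrightarrow> 1"
    using tendsto_diff[OF tendsto_const[of 1]] by fastforce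
  show ?thesis
    by (rule tendsto_sandwich[OF _ _ lim1 tendsto_const[of 1]])
       (use low measure_pmf.prob_le_1 in auto)
qed

end
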